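(* For all integers $c\geq 1$, $$\sum_{n\geq 0}\bar a_c(2n)q^n=\frac{f_2^{c-1}f_4^5}{f_1^{2c+2}f_8^2},\qquad \sum_{n\geq 0}\bar a_c(2n+1)q^n=2\,\frac{f_8^2}{f_4}\left(\frac{f_2}{f_1^2}\right)^{c+1}.$$
   Context: For an integer $k\geq 1$ let $f_k:=\prod_{n\geq 1}(1-q^{kn})$. For an integer $c\geq1$, the generalized overcubic partition function $\bar a_c(n)$ is defined by the generating function $\sum_{n\geq 0}\bar a_c(n)q^n=\dfrac{f_4^{c-1}}{f_1^2f_2^{2c-3}}$. *)

theory Defs
  imports "HOL-Computational_Algebra.Formal_Power_Series"
begin

text \<open>f_k = prod_{n>=1} (1 - q^{kn}) as a formal power series over the rationals.
  The m-th coefficient of the infinite product equals the m-th coefficient of the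
  finite product over 1 <= n <= m (further factors are 1 + O(q^{m+1}) for k >= 1).\<close>
definition eta_f :: "nat \<Rightarrow> rat fps" where
  "eta_f k = Abs_fps (\<lambda>m. fps_nth (\<Prod>n\<in>{1..m}. (1 - fps_X ^ (k * n))) m)"

text \<open>Generating function f_4^{c-1} / (f_1^2 f_2^{2c-3}); the possibly negative exponent
  2c-3 (c = 1) is handled by writing f_2^{-(2c-3)} = f_2 / f_2^{2c-2}.\<close>
definition overcubic_gf :: "nat \<Rightarrow> rat fps" where
  "overcubic_gf c = eta_f 4 ^ (c - 1) * eta_f 2 * inverse (eta_f 1 ^ 2 * eta_f 2 ^ (2 * c - 2))"

definition abar :: "nat \<Rightarrow> nat \<Rightarrow> rat" where
  "abar c n = fps_nth (overcubic_gf c) n"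

end

theory Submission
  imports Defs "HOL-Computational_Algebra.Formal_Laurent_Series" "HOL-Computational_Algebra.Polynomial"
begin
unbundle fps_syntax


definition eqn :: "nat \<Rightarrow> 'a::comm_ring_1 fps \<Rightarrow> 'a fps \<Rightarrow> bool" where
  "eqn n f g \<longleftrightarrow> (\<forall>i\<le>n. f $ i = g $ i)"

lemma eqn_refl[simp]: "eqn n f f" by (simp add: eqn_def)
lemma eqn_sym: "eqn n f g \<Longrightarrow> eqn n g f" by (simp add: eqn_def)
lemma eqn_trans: "eqn n f g \<Longrightarrow> eqn n g h \<Longrightarrow> eqn n f h" by (simp add: eqn_def)
lemma eqn_mono: "eqn n f g \<Longrightarrow> m \<le> n \<Longrightarrow> eqn m f g" by (simp add: eqn_def)

lemma eqn_mult: assumes "eqn n f g" "eqn n f' g'" shows "eqn n (f*f') (g*g')"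
  unfolding eqn_def
proof (intro allI impI)
  fix i assume i: "i \<le> n"
  show "(f*f') $ i = (g*g') $ i" unfolding fps_mult_nth
    by (rule sum.cong) (use assms i in \<open>auto simp: eqn_def\<close>)
qed

lemma eqn_add: "eqn n f g \<Longrightarrow> eqn n f' g' \<Longrightarrow> eqn n (f+f') (g+g')"
  by (simp add: eqn_def)

lemma eqn_power: "eqn n f g \<Longrightarrow> eqn n (f^k) (g^k)"
  by (induction k) (auto intro: eqn_mult)

lemma eqn_inverse:
  fixes f g :: "'a::field fps"
  assumes "eqn n f g" "f $ 0 \<noteq> 0"
  shows "eqn n (inverse f) (inverse g)"
proof -
  have g0: "g $ 0 \<noteq> 0" using assms by (auto simp: eqn_def)
  have "eqn n (f * inverse g) (g * inverse g)" by (rule eqn_mult[OF assms(1)]) simp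
  hence "eqn n (inverse f * (f * inverse g)) (inverse f * 1)"
    using g0 by (intro eqn_mult) (auto simp: inverse_mult_eq_1')
  moreover have "inverse f * (f * inverse g) = inverse g"
    using assms(2) by (simp add: mult.assoc[symmetric] inverse_mult_eq_1)
  ultimately show ?thesis by (auto simp: eqn_def)
qed

lemma eqn_ext: "(\<And>n. eqn n f g) \<Longrightarrow> f = g"
  by (auto simp: eqn_def fps_eq_iff)

definition P :: "nat \<Rightarrow> nat \<Rightarrow> rat fps" where
  "P k M = (\<Prod>n\<in>{1..M}. (1 - fps_X ^ (k * n)))"

lemma P_Suc: "P k (Suc M) = P k M * (1 - fps_X ^ (k * Suc M))"
  by (simp add: P_def atLeastAtMostSuc_conv mult.commute)

lemma P_0[simp]: "P k 0 = 1" by (simp add: P_def)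

lemma P_nth0[simp]: "k \<ge> 1 \<Longrightarrow> P k M $ 0 = 1"
  by (induction M) (auto simp: P_Suc)

lemma eqn_one_minus_X: "m < e \<Longrightarrow> eqn m (1 - fps_X ^ e) (1::'a::comm_ring_1 fps)"
  by (auto simp: eqn_def)

lemma P_stable: assumes "k \<ge> 1" "m \<le> M" shows "eqn m (P k M) (P k m)"
  using assms(2)
proof (induction M rule: dec_induct)
  case base then show ?case by simp
next
  case (step M)
  have "eqn m (P k M * (1 - fps_X ^ (k * Suc M))) (P k m * 1)"
    apply (rule eqn_mult[OF step.IH])
    apply (rule eqn_one_minus_X)
    using assms step.hyps by (metis le_imp_less_Suc less_le_trans mult_1 mult_le_mono1)
  then show ?case by (simp add: P_Suc)
qed

lemma eta_P: assumes "k \<ge> 1" shows "eqn M (eta_f k) (P k M)"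
  unfolding eqn_def
proof (intro allI impI)
  fix i assume "i \<le> M"
  have "eta_f k $ i = P k i $ i" by (simp add: eta_f_def P_def)
  also have "\<dots> = P k M $ i" using P_stable[OF assms \<open>i \<le> M\<close>] by (auto simp: eqn_def)
  finally show "eta_f k $ i = P k M $ i" .
qed

lemma eta_nth0[simp]: "k \<ge> 1 \<Longrightarrow> eta_f k $ 0 = 1"
  using eta_P[of k 0] by (auto simp: eqn_def)


abbreviation L :: "rat fps \<Rightarrow> rat fls" where "L \<equiv> fps_to_fls"

lemma L_inverse: "f $ 0 \<noteq> 0 \<Longrightarrow> L (inverse f) = inverse (L f)"
  by (simp add: fls_inverse_fps_to_fls)

lemma L_mult: "L (f * g) = L f * L g" by (rule fls_times_fps_to_fls)
lemma L_power: "L (f ^ n) = L f ^ n" by (rule fps_to_fls_power)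

lemma L_nz: "f $ 0 \<noteq> 0 \<Longrightarrow> L f \<noteq> 0"
  by (metis fps_nonzeroI fps_to_fls_eq_0_iff)

lemma P_Suc': "P k (Suc j) = P k j * (1 - (fps_X ^ k) ^ (Suc j))"
  by (simp only: P_Suc power_mult)

lemma one_minus_nz: "k \<ge> 1 \<Longrightarrow> j \<ge> 1 \<Longrightarrow> 1 - L (fps_X ^ k) ^ j \<noteq> 0"
proof -
  assume "k \<ge> 1" "j \<ge> 1"
  have "(1 - (fps_X ^ k) ^ j :: rat fps) $ 0 \<noteq> 0" using \<open>k\<ge>1\<close> \<open>j\<ge>1\<close> by (simp add: power_mult[symmetric])
  hence "L (1 - (fps_X ^ k) ^ j) \<noteq> 0" by (rule L_nz)
  thus ?thesis by (simp add: L_power)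
qed

definition Gb :: "nat \<Rightarrow> nat \<Rightarrow> nat \<Rightarrow> rat fps" where
  "Gb g N k = (if k \<le> N then P g N * inverse (P g k * P g (N - k)) else 0)"

lemma Gb_L: "g \<ge> 1 \<Longrightarrow> k \<le> N \<Longrightarrow> L (Gb g N k) = L (P g N) / (L (P g k) * L (P g (N - k)))"
  by (simp add: Gb_def L_mult L_inverse divide_inverse)

lemma LP_Suc: "L (P g (Suc j)) = L (P g j) * (1 - L (fps_X ^ g) ^ Suc j)"
  by (simp add: P_Suc' L_mult L_power)

lemma LP_nz: "g \<ge> 1 \<Longrightarrow> L (P g j) \<noteq> 0" using P_nth0[of g j] by (intro L_nz) simp

lemma pascal_alg0:
  fixes pN pk pr u v :: "'a::field"
  assumes "pk \<noteq> 0" "pr \<noteq> 0" "u \<noteq> 0" "v \<noteq> 0"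
  shows "pN*(u + (1-u)*v) / (pk*u * (pr*v))
       = pN/(pk*(pr*v)) + (1-u) * (pN/(pk*u*pr))"
    and "pN*(v + (1-v)*u) / (pk*u * (pr*v))
       = pN/(pk*u*pr) + (1-v) * (pN/(pk*(pr*v)))"
  using assms by (simp_all add: field_simps)

lemma pascal_alg:
  fixes pN pk pr x y :: "'a::field"
  assumes "pk \<noteq> 0" "pr \<noteq> 0" "1 - x \<noteq> 0" "1 - y \<noteq> 0"
  shows "pN*(1-x*y) / (pk*(1-x) * (pr*(1-y)))
       = pN/(pk*(pr*(1-y))) + x * (pN/(pk*(1-x)*pr))"
    and "pN*(1-x*y) / (pk*(1-x) * (pr*(1-y)))
       = pN/(pk*(1-x)*pr) + y * (pN/(pk*(pr*(1-y))))"
proof -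
  have a: "1 - x*y = (1-y) + (1 - (1-y))*(1-x)" "1 - x*y = (1-x) + (1-(1-x))*(1-y)" by (simp_all add: algebra_simps)
  show "pN*(1-x*y) / (pk*(1-x) * (pr*(1-y)))
       = pN/(pk*(pr*(1-y))) + x * (pN/(pk*(1-x)*pr))"
    using pascal_alg0(1)[OF assms, of pN] unfolding a(2) by simp
  show "pN*(1-x*y) / (pk*(1-x) * (pr*(1-y)))
       = pN/(pk*(1-x)*pr) + y * (pN/(pk*(pr*(1-y))))"
    using pascal_alg0(2)[OF assms, of pN] unfolding a(1) by simp
qed


lemma Gb_0[simp]: "g \<ge> 1 \<Longrightarrow> Gb g N 0 = 1"
  using P_nth0[of g N] by (simp add: Gb_def inverse_mult_eq_1')

lemma Gb_diag[simp]: "g \<ge> 1 \<Longrightarrow> Gb g N N = 1"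
  using P_nth0[of g N] by (simp add: Gb_def inverse_mult_eq_1')

lemma Gb_gt[simp]: "k > N \<Longrightarrow> Gb g N k = 0"
  by (simp add: Gb_def)

lemma one_minus_nz': "g \<ge> 1 \<Longrightarrow> 1 - L (fps_X ^ g) ^ Suc j \<noteq> 0"
  by (rule one_minus_nz) auto

lemma Gb_mid:
  assumes g: "g \<ge> 1" and r: "N = k + r + 1"
  shows "L (Gb g (Suc N) (Suc k)) = L (P g N) * (1 - L (fps_X ^ g) ^ Suc k * L (fps_X ^ g) ^ Suc r)
          / (L (P g k) * (1 - L (fps_X ^ g) ^ Suc k) * (L (P g r) * (1 - L (fps_X ^ g) ^ Suc r)))"
    and "L (Gb g N k) = L (P g N) / (L (P g k) * (L (P g r) * (1 - L (fps_X ^ g) ^ Suc r)))"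
    and "L (Gb g N (Suc k)) = L (P g N) / (L (P g k) * (1 - L (fps_X ^ g) ^ Suc k) * L (P g r))"
proof -
  have e: "Suc N - Suc k = Suc r" "N - k = Suc r" "N - Suc k = r" using r by auto
  have le1: "Suc k \<le> Suc N" and le2: "k \<le> N" and le3: "Suc k \<le> N" using r by auto
  have b: "L (fps_X ^ g) ^ Suc N = L (fps_X ^ g) ^ Suc k * L (fps_X ^ g) ^ Suc r"
    by (simp add: r power_add[symmetric])
  show "L (Gb g (Suc N) (Suc k)) = L (P g N) * (1 - L (fps_X ^ g) ^ Suc k * L (fps_X ^ g) ^ Suc r)
          / (L (P g k) * (1 - L (fps_X ^ g) ^ Suc k) * (L (P g r) * (1 - L (fps_X ^ g) ^ Suc r)))"
    unfolding Gb_L[OF g, of "Suc k" "Suc N", OF le1]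
    unfolding e LP_Suc[of g N] LP_Suc[of g k] LP_Suc[of g r] b ..
  show "L (Gb g N k) = L (P g N) / (L (P g k) * (L (P g r) * (1 - L (fps_X ^ g) ^ Suc r)))"
    unfolding Gb_L[OF g, of k N, OF le2]
    unfolding e LP_Suc[of g r] ..
  show "L (Gb g N (Suc k)) = L (P g N) / (L (P g k) * (1 - L (fps_X ^ g) ^ Suc k) * L (P g r))"
    unfolding Gb_L[OF g, of "Suc k" N, OF le3]
    unfolding e LP_Suc[of g k] ..
qed

lemma pascal1:
  assumes g: "g \<ge> 1"
  shows "Gb g (Suc N) (Suc k) = Gb g N k + (fps_X ^ g) ^ (Suc k) * Gb g N (Suc k)"
proof (cases "k < N")
  case True
  then obtain r where r: "N = k + r + 1" by (metis add.commute add_Suc less_imp_Suc_add plus_1_eq_Suc)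
  have "L (Gb g (Suc N) (Suc k)) = L (Gb g N k + (fps_X ^ g) ^ (Suc k) * Gb g N (Suc k))"
    unfolding fps_to_fls_plus L_mult L_power[of "fps_X ^ g"] Gb_mid[OF g r]
    by (rule pascal_alg(1)[OF LP_nz[OF g] LP_nz[OF g] one_minus_nz'[OF g] one_minus_nz'[OF g]])
  then show ?thesis by (simp only: fps_to_fls_eq_iff)
next
  case False
  then show ?thesis using g by (cases "k = N") auto
qed

lemma pascal2:
  assumes g: "g \<ge> 1"
  shows "Gb g (Suc N) (Suc k) = Gb g N (Suc k) + (fps_X ^ g) ^ (N - k) * Gb g N k"
proof (cases "k < N")
  case True
  then obtain r where r: "N = k + r + 1" by (metis add.commute add_Suc less_imp_Suc_add plus_1_eq_Suc)
  have e: "N - k = Suc r" using r by simp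
  have "L (Gb g (Suc N) (Suc k)) = L (Gb g N (Suc k) + (fps_X ^ g) ^ (N - k) * Gb g N k)"
    unfolding fps_to_fls_plus L_mult L_power[of "fps_X ^ g"] Gb_mid[OF g r] e
    by (rule pascal_alg(2)[OF LP_nz[OF g] LP_nz[OF g] one_minus_nz'[OF g] one_minus_nz'[OF g]])
  then show ?thesis by (simp only: fps_to_fls_eq_iff)
next
  case False
  then show ?thesis using g by (cases "k = N") auto
qed


definition tr :: "int \<Rightarrow> int" where "tr t = t * (t - 1) div 2"

lemma tr_succ: "tr (t + 1) = tr t + t"
proof -
  have "(t + 1) * (t + 1 - 1) = t * (t - 1) + t * 2" by (simp add: algebra_simps)
  then show ?thesis unfolding tr_def by simp
qed

lemma tr_nonneg: "tr t \<ge> 0"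
proof -
  have "t * (t - 1) \<ge> 0"
  proof (cases "t \<le> 0")
    case True then show ?thesis by (simp add: mult_nonpos_nonpos)
  next
    case False then show ?thesis by simp
  qed
  then show ?thesis unfolding tr_def by simp
qed

definition ex :: "nat \<Rightarrow> nat \<Rightarrow> int \<Rightarrow> nat" where
  "ex al be t = nat (int al * tr t + int be * tr (t + 1))"

lemma ex_int: "int (ex al be t) = int al * tr t + int be * tr (t + 1)"
  unfolding ex_def using tr_nonneg[of t] tr_nonneg[of "t+1"] by simp

lemma ex_succ: "int (ex al be (t + 1)) = int (ex al be t) + (int al + int be) * t + int be"
  unfolding ex_int using tr_succ[of t] tr_succ[of "t+1"] by (simp add: algebra_simps)

lemma ex_0[simp]: "ex al be 0 = 0" by (simp add: ex_def tr_def)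

definition Q :: "nat \<Rightarrow> nat \<Rightarrow> nat \<Rightarrow> nat \<Rightarrow> rat fps poly" where
  "Q al be a b = (\<Prod>i<a. [: fps_X ^ (al + (al+be) * i), 1 :]) * (\<Prod>j<b. [: 1, fps_X ^ (be + (al+be) * j) :])"

definition cf :: "nat \<Rightarrow> nat \<Rightarrow> nat \<Rightarrow> nat \<Rightarrow> nat \<Rightarrow> rat fps" where
  "cf al be a b k = Gb (al+be) (a+b) k * fps_X ^ ex al be (int k - int a)"

lemma coeff_times_lin1: "coeff ((p::rat fps poly) * [:c, 1:]) k = c * coeff p k + (if k = 0 then 0 else coeff p (k - 1))"
  by (simp add: coeff_pCons')

lemma coeff_times_lin2: "coeff ((p::rat fps poly) * [:1, c:]) k = coeff p k + (if k = 0 then 0 else c * coeff p (k - 1))"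
  by (simp add: coeff_pCons')

lemma Q_a0: assumes g: "al + be \<ge> 1" shows "coeff (Q al be a 0) k = cf al be a 0 k"
proof (induction a arbitrary: k)
  case 0
  then show ?case using g by (cases k) (simp_all add: Q_def cf_def)
next
  case (Suc a)
  have Qs: "Q al be (Suc a) 0 = Q al be a 0 * [: fps_X ^ (al + (al+be) * a), 1 :]"
    by (simp add: Q_def)
  show ?case
  proof (cases k)
    case 0
    have "int (ex al be (- 1 - int a)) = int (al + (al+be)*a + ex al be (- int a))"
      using ex_succ[of al be "- 1 - int a"] by (simp add: algebra_simps)
    then have e: "ex al be (- 1 - int a) = al + (al+be)*a + ex al be (- int a)"
      by (simp only: of_nat_eq_iff)
    show ?thesis unfolding Qs coeff_times_lin1 Suc.IH using 0 g
      by (simp add: cf_def e power_add)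
  next
    case (Suc k')
    have "int ((al+be) * Suc k' + ex al be (int k' - int a)) = int (al + (al+be)*a + ex al be (int k' - int a + 1))"
      using ex_succ[of al be "int k' - int a"] by (simp add: algebra_simps)
    then have e: "(al+be) * Suc k' + ex al be (int k' - int a) = al + (al+be)*a + ex al be (int k' - int a + 1)"
      by (simp only: of_nat_eq_iff)
    have p1: "Gb (al+be) (Suc a) (Suc k') = Gb (al+be) a k' + (fps_X ^ (al+be)) ^ Suc k' * Gb (al+be) a (Suc k')"
      by (rule pascal1[OF g])
    have "fps_X ^ (al + (al+be) * a) * (Gb (al + be) a (Suc k') * fps_X ^ ex al be (int (Suc k') - int a))
        = (fps_X ^ (al+be)) ^ Suc k' * Gb (al+be) a (Suc k') * fps_X ^ ex al be (int k' - int a)"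
    proof -
      have "fps_X ^ (al + (al+be) * a) * fps_X ^ ex al be (int (Suc k') - int a)
          = (fps_X ^ (al+be)) ^ Suc k' * (fps_X ^ ex al be (int k' - int a) :: rat fps)"
        unfolding power_mult[symmetric] power_add[symmetric]
        using e by (simp add: algebra_simps)
      then show ?thesis by (simp add: algebra_simps)
    qed
    then show ?thesis unfolding Qs coeff_times_lin1 Suc.IH using Suc
      by (simp add: cf_def p1 algebra_simps)
  qed
qed

lemma Q_coeff: assumes g: "al + be \<ge> 1" shows "coeff (Q al be a b) k = cf al be a b k"
proof (induction b arbitrary: k)
  case 0
  then show ?case by (rule Q_a0[OF g])
next
  case (Suc b)
  have Qs: "Q al be a (Suc b) = Q al be a b * [: 1, fps_X ^ (be + (al+be) * b) :]"
    unfolding Q_def by (simp only: prod.lessThan_Suc mult.assoc)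
  show ?case
  proof (cases k)
    case 0
    show ?thesis unfolding Qs coeff_times_lin2 Suc.IH using 0 g
      by (simp add: cf_def)
  next
    case (Suc k')
    have p2: "Gb (al+be) (Suc (a+b)) (Suc k') = Gb (al+be) (a+b) (Suc k') + (fps_X ^ (al+be)) ^ (a + b - k') * Gb (al+be) (a+b) k'"
      by (rule pascal2[OF g])
    have key: "(fps_X ^ (al+be)) ^ (a + b - k') * Gb (al+be) (a+b) k' * fps_X ^ ex al be (int (Suc k') - int a)
        = fps_X ^ (be + (al+be) * b) * (Gb (al+be) (a+b) k' * fps_X ^ ex al be (int k' - int a))"
    proof (cases "k' \<le> a + b")
      case True
      have "int ((al+be) * (a + b - k') + ex al be (int k' - int a + 1)) = int (be + (al+be) * b + ex al be (int k' - int a))"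
      proof -
        have d: "int ((al+be) * (a + b - k')) = (int al + int be) * (int a + int b - int k')"
          using True by (simp add: of_nat_diff)
        have E: "int (ex al be (int k' - int a + 1)) = int (ex al be (int k' - int a)) + (int al + int be) * (int k' - int a) + int be"
          by (rule ex_succ)
        show ?thesis unfolding of_nat_add d E of_nat_mult by (simp add: algebra_simps of_nat_diff[OF True])
      qed
      then have e: "(al+be) * (a + b - k') + ex al be (int k' - int a + 1) = be + (al+be) * b + ex al be (int k' - int a)"
        by (simp only: of_nat_eq_iff)
      have "(fps_X ^ (al+be)) ^ (a + b - k') * fps_X ^ ex al be (int (Suc k') - int a)
          = fps_X ^ (be + (al+be) * b) * (fps_X ^ ex al be (int k' - int a) :: rat fps)"
        unfolding power_mult[symmetric] power_add[symmetric]
        using e by (simp add: algebra_simps)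
      then show ?thesis by (simp add: algebra_simps)
    next
      case False
      then show ?thesis by simp
    qed
    have "cf al be a (Suc b) (Suc k') = Gb (al+be) (a+b) (Suc k') * fps_X ^ ex al be (int (Suc k') - int a) + (fps_X ^ (al+be)) ^ (a + b - k') * Gb (al+be) (a+b) k' * fps_X ^ ex al be (int (Suc k') - int a)"
      unfolding cf_def by (simp only: add_Suc_right p2 distrib_right)
    also have "\<dots> = cf al be a b (Suc k') + fps_X ^ (be + (al+be) * b) * cf al be a b k'"
      unfolding key cf_def ..
    finally have calc: "cf al be a (Suc b) (Suc k') = cf al be a b (Suc k') + fps_X ^ (be + (al+be) * b) * cf al be a b k'" .
    show ?thesis unfolding Qs coeff_times_lin2 Suc.IH using Suc calc by simp
  qed
qed


lemma Q_eval:
  assumes g: "al + be \<ge> 1"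
  shows "(\<Prod>i<a. fps_X ^ (al + (al+be) * i) + 1) * (\<Prod>j<b. 1 + fps_X ^ (be + (al+be) * j))
         = (\<Sum>k\<le>a+b. cf al be a b k)"
proof -
  have ev: "poly (Q al be a b) 1 = (\<Prod>i<a. fps_X ^ (al + (al+be) * i) + 1) * (\<Prod>j<b. 1 + fps_X ^ (be + (al+be) * j))"
    by (simp add: Q_def poly_prod)
  have deg: "degree (Q al be a b) \<le> a + b"
    by (rule degree_le) (simp add: Q_coeff[OF g] cf_def)
  have "poly (Q al be a b) 1 = (\<Sum>k\<le>degree (Q al be a b). coeff (Q al be a b) k)"
    by (simp add: poly_altdef)
  also have "\<dots> = (\<Sum>k\<le>a+b. coeff (Q al be a b) k)"
    by (rule sum.mono_neutral_left) (use deg in \<open>auto simp: coeff_eq_0\<close>)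
  also have "\<dots> = (\<Sum>k\<le>a+b. cf al be a b k)" by (simp add: Q_coeff[OF g])
  finally show ?thesis using ev by simp
qed

lemma tr_bound: "tr t + 1 \<ge> \<bar>t\<bar>"
proof -
  have "(t - 1) * (t - 2) \<ge> 0"
  proof (cases "t \<le> 1")
    case True then show ?thesis by (simp add: mult_nonpos_nonpos)
  next
    case False then show ?thesis by simp
  qed
  moreover have "t * (t + 1) \<ge> 0"
  proof (cases "t \<le> -1")
    case True then show ?thesis by (simp add: mult_nonpos_nonpos)
  next
    case False then show ?thesis by simp
  qed
  moreover have "2 * tr t = t * (t - 1)"
  proof -
    have "even (t * (t - 1))" by simp
    then show ?thesis unfolding tr_def by simp
  qed
  ultimately show ?thesis by (auto simp: algebra_simps abs_if)
qed

lemma tr_neg: "tr (t + 1) = tr (- t)"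
  unfolding tr_def by (simp add: algebra_simps)

lemma ex_bound: assumes "al + be \<ge> 1" shows "\<bar>t\<bar> \<le> int (ex al be t) + 1"
proof -
  have a: "tr t \<ge> 0" "tr (t+1) \<ge> 0" by (rule tr_nonneg)+
  have b: "tr (t+1) + 1 \<ge> \<bar>t\<bar>" using tr_bound[of "-t"] tr_neg[of t] by simp
  have c: "tr t + 1 \<ge> \<bar>t\<bar>" by (rule tr_bound)
  show ?thesis
  proof (cases "al \<ge> 1")
    case True
    have "int al * tr t \<ge> tr t" using True a by (simp add: mult_le_cancel_right1)
    moreover have "int be * tr (t+1) \<ge> 0" using a by simp
    ultimately show ?thesis using c unfolding ex_int by linarith
  next
    case False
    then have "be \<ge> 1" using assms by simp
    then have "int be * tr (t+1) \<ge> tr (t+1)" using a by (simp add: mult_le_cancel_right1)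
    moreover have "int al * tr t \<ge> 0" using a by simp
    ultimately show ?thesis using b unfolding ex_int by linarith
  qed
qed

definition Th :: "nat \<Rightarrow> nat \<Rightarrow> rat fps" where
  "Th al be = Abs_fps (\<lambda>n. of_nat (card {t::int. ex al be t = n}))"

lemma sum_card_swap:
  fixes e :: "int \<Rightarrow> nat" and H :: "nat \<Rightarrow> rat"
  assumes bound: "\<And>t. e t \<le> i \<Longrightarrow> \<bar>t\<bar> \<le> int m"
  shows "(\<Sum>k\<le>2*m. (if e (int k - int m) \<le> i then H (i - e (int k - int m)) else 0))
       = (\<Sum>j\<le>i. of_nat (card {t. e t = j}) * H (i - j))"
proof -
  have "(\<Sum>k\<le>2*m. (if e (int k - int m) \<le> i then H (i - e (int k - int m)) else 0))
      = (\<Sum>k\<le>2*m. \<Sum>j\<le>i. (if e (int k - int m) = j then H (i - j) else 0))"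
    by (rule sum.cong) auto
  also have "\<dots> = (\<Sum>j\<le>i. \<Sum>k\<le>2*m. (if e (int k - int m) = j then H (i - j) else 0))"
    by (rule sum.swap)
  also have "\<dots> = (\<Sum>j\<le>i. of_nat (card {t. e t = j}) * H (i - j))"
  proof (rule sum.cong[OF refl])
    fix j assume j: "j \<in> {..i}"
    have "(\<Sum>k\<le>2*m. (if e (int k - int m) = j then H (i - j) else 0))
        = (\<Sum>k\<in>{k\<in>{..2*m}. e (int k - int m) = j}. H (i - j))"
      using sum.inter_filter[of "{..2*m}" "\<lambda>_. H (i-j)" "\<lambda>k. e (int k - int m) = j"] by simp
    also have "\<dots> = of_nat (card {k\<in>{..2*m}. e (int k - int m) = j}) * H (i - j)"
      by simp
    also have "card {k\<in>{..2*m}. e (int k - int m) = j} = card {t. e t = j}"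
    proof -
      have "(\<lambda>k. int k - int m) ` {k\<in>{..2*m}. e (int k - int m) = j} = {t. e t = j}"
      proof
        show "(\<lambda>k. int k - int m) ` {k\<in>{..2*m}. e (int k - int m) = j} \<subseteq> {t. e t = j}" by auto
        show "{t. e t = j} \<subseteq> (\<lambda>k. int k - int m) ` {k\<in>{..2*m}. e (int k - int m) = j}"
        proof
          fix t assume t: "t \<in> {t. e t = j}"
          then have "\<bar>t\<bar> \<le> int m" using bound j by auto
          then have "t = int (nat (t + int m)) - int m" "nat (t + int m) \<in> {..2*m}" by auto
          then show "t \<in> (\<lambda>k. int k - int m) ` {k\<in>{..2*m}. e (int k - int m) = j}"
            using t by (intro image_eqI[of _ _ "nat (t + int m)"]) auto
        qed
      qed
      moreover have "inj_on (\<lambda>k. int k - int m) {k\<in>{..2*m}. e (int k - int m) = j}"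
        by (auto simp: inj_on_def)
      ultimately show ?thesis using card_image by fastforce
    qed
    finally show "(\<Sum>k\<le>2*m. (if e (int k - int m) = j then H (i - j) else 0))
        = of_nat (card {t. e t = j}) * H (i - j)" .
  qed
  finally show ?thesis .
qed


lemma Gb_approx:
  assumes G: "G \<ge> 1" and k: "k \<le> N" "n \<le> k" "n \<le> N - k"
  shows "eqn n (Gb G N k) (inverse (eta_f G))"
proof -
  have e1: "eqn n (P G N) (eta_f G)" by (rule eqn_mono[OF eqn_sym[OF eta_P[OF G]]]) (use k in auto)
  have e2: "eqn n (P G k) (eta_f G)" by (rule eqn_mono[OF eqn_sym[OF eta_P[OF G]]]) (use k in auto)
  have e3: "eqn n (P G (N-k)) (eta_f G)" by (rule eqn_mono[OF eqn_sym[OF eta_P[OF G]]]) (use k in auto)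
  have "eqn n (P G N * inverse (P G k * P G (N - k))) (eta_f G * inverse (eta_f G * eta_f G))"
    by (intro eqn_mult e1 eqn_inverse e2 e3) (use G in simp)
  moreover have "eta_f G * inverse (eta_f G * eta_f G) = inverse (eta_f G)"
    using G by (simp add: fps_inverse_mult mult.assoc[symmetric] inverse_mult_eq_1')
  ultimately show ?thesis using k by (simp add: Gb_def)
qed

lemma limit_eqn:
  assumes g: "al + be \<ge> 1" and m: "2 * n + 1 \<le> m"
  shows "eqn n (\<Sum>k\<le>2*m. cf al be m m k) (Th al be * inverse (eta_f (al+be)))"
  unfolding eqn_def
proof (intro allI impI)
  fix i assume i: "i \<le> n"
  define H where "H = inverse (eta_f (al+be))"
  have "(\<Sum>k\<le>2*m. cf al be m m k) $ i
      = (\<Sum>k\<le>2*m. (if ex al be (int k - int m) \<le> i then H $ (i - ex al be (int k - int m)) else 0))"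
    unfolding fps_sum_nth
  proof (rule sum.cong[OF refl])
    fix k assume k: "k \<in> {..2*m}"
    show "cf al be m m k $ i = (if ex al be (int k - int m) \<le> i then H $ (i - ex al be (int k - int m)) else 0)"
    proof (cases "ex al be (int k - int m) \<le> i")
      case True
      have "\<bar>int k - int m\<bar> \<le> int n + 1" using ex_bound[OF g, of "int k - int m"] True i by linarith
      then have k1: "n \<le> k" and k2: "n \<le> m + m - k" and k3: "k \<le> m + m" using k m by auto
      have "eqn n (Gb (al+be) (m+m) k) H" unfolding H_def
        by (rule Gb_approx[OF g k3 k1 k2])
      then have "Gb (al+be) (m+m) k $ (i - ex al be (int k - int m)) = H $ (i - ex al be (int k - int m))"
        using i by (auto simp: eqn_def)
      then show ?thesis using True by (simp add: cf_def fps_X_power_mult_right_nth)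
    next
      case False
      then show ?thesis by (simp add: cf_def fps_X_power_mult_right_nth)
    qed
  qed
  also have "\<dots> = (\<Sum>j\<le>i. of_nat (card {t. ex al be t = j}) * H $ (i - j))"
  proof (rule sum_card_swap)
    fix t assume "ex al be t \<le> i"
    then show "\<bar>t\<bar> \<le> int m" using ex_bound[OF g, of t] i m by linarith
  qed
  also have "\<dots> = (Th al be * H) $ i"
    by (simp add: fps_mult_nth Th_def atLeast0AtMost)
  finally show "(\<Sum>k\<le>2*m. cf al be m m k) $ i = (Th al be * inverse (eta_f (al+be))) $ i"
    unfolding H_def .
qed


lemma ringA:
  fixes A B C D E x1 x2 x4 :: "'a::comm_ring_1"
  assumes h: "A*B*C = D*E"
  shows "(A*(1+x1)) * (B*(1-x4)) * (C*(1-x1)*(1-x2)) = (D*(1-x1*x1)*(1-x4))*(E*(1-x2))"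
proof -
  have "(A*(1+x1)) * (B*(1-x4)) * (C*(1-x1)*(1-x2)) = (A*B*C) * ((1+x1)*(1-x1)*(1-x4)*(1-x2))"
    by (simp only: ac_simps)
  also have "\<dots> = (D*E) * ((1-x1*x1)*(1-x4)*(1-x2))" unfolding h by (simp add: algebra_simps)
  finally show ?thesis by (simp only: ac_simps)
qed

lemma prodA: "(\<Prod>i<m. 1 + fps_X ^ (2*i+1)) * P 4 m * P 1 (2*m) = P 2 (2*m) * (P 2 m :: rat fps)"
proof (induction m)
  case 0 then show ?case by simp
next
  case (Suc m)
  have e1: "P 1 (2 * Suc m) = P 1 (2*m) * (1 - fps_X ^ (2*m+1)) * (1 - fps_X ^ (2*m+2))"
    by (simp add: P_Suc)
  have s: "2 * Suc m = Suc (Suc (2*m))" by simp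
  have x1: "(fps_X :: rat fps) ^ (2 * Suc (2*m)) = fps_X ^ (2*m+1) * fps_X ^ (2*m+1)"
    by (simp add: power_add[symmetric])
  have x2: "(fps_X :: rat fps) ^ (2 * Suc (Suc (2*m))) = fps_X ^ (4*m+4)"
    by (rule arg_cong[of _ _ "\<lambda>n. (fps_X::rat fps)^n"]) simp
  have e2: "P 2 (2 * Suc m) = P 2 (2*m) * (1 - fps_X ^ (2*m+1) * fps_X ^ (2*m+1)) * (1 - fps_X ^ (4*m+4))"
    unfolding s P_Suc x1 x2 ..
  have e3: "P 4 (Suc m) = P 4 m * (1 - fps_X ^ (4*m+4))" by (simp add: P_Suc)
  have e4: "P 2 (Suc m) = P 2 m * (1 - fps_X ^ (2*m+2))" by (simp add: P_Suc)
  have e0: "(\<Prod>i<Suc m. 1 + fps_X ^ (2*i+1)) = (\<Prod>i<m. 1 + fps_X ^ (2*i+1)) * (1 + (fps_X ^ (2*m+1) :: rat fps))"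
    by simp
  show ?case unfolding e0 e1 e2 e3 e4 by (rule ringA[OF Suc.IH])
qed

lemma ringB:
  fixes A B C x :: "'a::comm_ring_1"
  assumes h: "A*B = C"
  shows "(A*(1+x)) * (B*(1-x)) = C*(1-x*x)"
proof -
  have "(A*(1+x)) * (B*(1-x)) = (A*B) * ((1+x)*(1-x))" by (simp only: ac_simps)
  then show ?thesis unfolding h by (simp add: algebra_simps)
qed

lemma prodB: "(\<Prod>i<m. 1 + fps_X ^ (i+1)) * P 1 m = (P 2 m :: rat fps)"
proof (induction m)
  case 0 then show ?case by simp
next
  case (Suc m)
  have e1: "P 1 (Suc m) = P 1 m * (1 - fps_X ^ (m+1))" by (simp add: P_Suc)
  have x1: "(fps_X :: rat fps) ^ (2 * Suc m) = fps_X ^ (m+1) * fps_X ^ (m+1)"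
    by (simp add: power_add[symmetric])
  have e2: "P 2 (Suc m) = P 2 m * (1 - fps_X ^ (m+1) * fps_X ^ (m+1))"
    unfolding P_Suc x1 ..
  have e0: "(\<Prod>i<Suc m. 1 + fps_X ^ (i+1)) = (\<Prod>i<m. 1 + fps_X ^ (i+1)) * (1 + (fps_X ^ (m+1) :: rat fps))"
    by simp
  show ?case unfolding e0 e1 e2 by (rule ringB[OF Suc.IH])
qed

lemma prodB0: "(\<Prod>j<Suc m. 1 + fps_X ^ j) = 2 * (\<Prod>i<m. 1 + (fps_X ^ (i+1) :: rat fps))"
  by (induction m) (simp_all add: mult.assoc)


lemma eqP: "k \<ge> 1 \<Longrightarrow> n \<le> M \<Longrightarrow> eqn n (P k M) (eta_f k)"
  by (rule eqn_mono[OF eqn_sym[OF eta_P]])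

lemma solve_inv: fixes A B C :: "rat fps" assumes "B $ 0 \<noteq> 0" "A * B = C" shows "A = C * inverse B"
proof -
  have "A = A * (B * inverse B)" using assms(1) by (simp add: inverse_mult_eq_1')
  also have "\<dots> = C * inverse B" using assms(2) by (simp add: mult.assoc[symmetric])
  finally show ?thesis .
qed

lemma prodA': "(\<Prod>i<m. 1 + fps_X ^ (2*i+1)) = P 2 (2*m) * P 2 m * inverse (P 4 m * P 1 (2*m))"
  by (rule solve_inv) (use prodA[of m] in \<open>simp_all add: mult.assoc\<close>)

lemma prodB': "(\<Prod>i<m. 1 + fps_X ^ (i+1)) = P 2 m * inverse (P 1 m)"
  by (rule solve_inv) (use prodB[of m] in simp_all)

lemma limit_eq:
  assumes "\<And>n. eqn n (Th al be * inverse (eta_f (al+be))) R"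
  shows "Th al be * inverse (eta_f (al+be)) = R"
  using assms by (rule eqn_ext)

lemma ThA: "Th 1 1 * inverse (eta_f 2) = (eta_f 2 * eta_f 2 * inverse (eta_f 4 * eta_f 1))^2"
proof -
  have "eqn n (Th 1 1 * inverse (eta_f 2)) ((eta_f 2 * eta_f 2 * inverse (eta_f 4 * eta_f 1))^2)" for n
  proof -
    define m where "m = 2*n+1"
    have ev: "(\<Prod>i<m. fps_X ^ (1 + (1+1) * i) + 1) * (\<Prod>j<m. 1 + fps_X ^ (1 + (1+1) * j))
         = (\<Sum>k\<le>m+m. cf 1 1 m m k)" by (rule Q_eval) simp
    have s0: "(\<Sum>k\<le>2*m. cf 1 1 m m k) = (\<Sum>k\<le>m+m. cf 1 1 m m k)" by (simp only: mult_2)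
    have p1: "(\<Prod>i<m. fps_X ^ (1 + (1+1) * i) + 1) = (\<Prod>i<m. 1 + (fps_X ^ (2*i+1) :: rat fps))"
      by (rule prod.cong[OF refl]) (simp add: add.commute)
    have p2: "(\<Prod>i<m. 1 + fps_X ^ (1 + (1+1) * i)) = (\<Prod>i<m. 1 + (fps_X ^ (2*i+1) :: rat fps))"
      by (rule prod.cong[OF refl]) (simp add: add.commute)
    have "(\<Sum>k\<le>2*m. cf 1 1 m m k) = (\<Prod>i<m. 1 + (fps_X ^ (2*i+1) :: rat fps))^2"
      unfolding s0 ev[symmetric] p1 p2 power2_eq_square ..
    also have "\<dots> = (P 2 (2*m) * P 2 m * inverse (P 4 m * P 1 (2*m)))^2" unfolding prodA' ..
    finally have lhs: "(\<Sum>k\<le>2*m. cf 1 1 m m k) = (P 2 (2*m) * P 2 m * inverse (P 4 m * P 1 (2*m)))^2" .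
    have l: "eqn n (\<Sum>k\<le>2*m. cf 1 1 m m k) (Th 1 1 * inverse (eta_f 2))"
      using limit_eqn[of 1 1 n m] unfolding one_add_one by (simp add: m_def)
    have r: "eqn n (\<Sum>k\<le>2*m. cf 1 1 m m k) ((eta_f 2 * eta_f 2 * inverse (eta_f 4 * eta_f 1))^2)"
      unfolding lhs
      by (rule eqn_power, rule eqn_mult, rule eqn_mult, (rule eqP; simp add: m_def), (rule eqP; simp add: m_def),
          rule eqn_inverse, rule eqn_mult, (rule eqP; simp add: m_def), (rule eqP; simp add: m_def), simp)
    show ?thesis by (rule eqn_trans[OF eqn_sym[OF l] r])
  qed
  then show ?thesis by (rule eqn_ext)
qed

lemma ThB: "Th 1 0 * inverse (eta_f 1) = 2 * (eta_f 2 * inverse (eta_f 1)) * (eta_f 2 * inverse (eta_f 1))"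
proof -
  have "eqn n (Th 1 0 * inverse (eta_f 1)) (2 * (eta_f 2 * inverse (eta_f 1)) * (eta_f 2 * inverse (eta_f 1)))" for n
  proof -
    define m where "m = 2*n+1"
    have ev: "(\<Prod>i<Suc m. fps_X ^ (1 + (1+0) * i) + 1) * (\<Prod>j<Suc m. 1 + fps_X ^ (0 + (1+0) * j))
         = (\<Sum>k\<le>Suc m+Suc m. cf 1 0 (Suc m) (Suc m) k)" by (rule Q_eval) simp
    have s0: "(\<Sum>k\<le>2*Suc m. cf 1 0 (Suc m) (Suc m) k) = (\<Sum>k\<le>Suc m+Suc m. cf 1 0 (Suc m) (Suc m) k)" by (simp only: mult_2)
    have p1: "(\<Prod>i<Suc m. fps_X ^ (1 + (1+0) * i) + 1) = (\<Prod>i<Suc m. 1 + (fps_X ^ (i+1) :: rat fps))"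
      by (rule prod.cong[OF refl]) (simp add: add.commute)
    have p2: "(\<Prod>i<Suc m. 1 + fps_X ^ (0 + (1+0) * i)) = (\<Prod>i<Suc m. 1 + (fps_X ^ i :: rat fps))"
      by (rule prod.cong[OF refl]) simp
    have "(\<Sum>k\<le>2*Suc m. cf 1 0 (Suc m) (Suc m) k) = (\<Prod>i<Suc m. 1 + (fps_X ^ (i+1) :: rat fps)) * (2 * (\<Prod>i<m. 1 + (fps_X ^ (i+1) :: rat fps)))"
      unfolding s0 ev[symmetric] p1 p2 prodB0 ..
    also have "\<dots> = 2 * (P 2 (Suc m) * inverse (P 1 (Suc m))) * (P 2 m * inverse (P 1 m))"
      unfolding prodB' by (simp only: ac_simps)
    finally have lhs: "(\<Sum>k\<le>2*Suc m. cf 1 0 (Suc m) (Suc m) k) = 2 * (P 2 (Suc m) * inverse (P 1 (Suc m))) * (P 2 m * inverse (P 1 m))" .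
    have l: "eqn n (\<Sum>k\<le>2*Suc m. cf 1 0 (Suc m) (Suc m) k) (Th 1 0 * inverse (eta_f 1))"
      using limit_eqn[of 1 0 n "Suc m"] by (simp add: m_def)
    have e1: "eqn n (P 2 (Suc m) * inverse (P 1 (Suc m))) (eta_f 2 * inverse (eta_f 1))"
      by (rule eqn_mult, (rule eqP; simp add: m_def), rule eqn_inverse, (rule eqP; simp add: m_def), simp)
    have e2: "eqn n (P 2 m * inverse (P 1 m)) (eta_f 2 * inverse (eta_f 1))"
      by (rule eqn_mult, (rule eqP; simp add: m_def), rule eqn_inverse, (rule eqP; simp add: m_def), simp)
    have r: "eqn n (\<Sum>k\<le>2*Suc m. cf 1 0 (Suc m) (Suc m) k) (2 * (eta_f 2 * inverse (eta_f 1)) * (eta_f 2 * inverse (eta_f 1)))"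
      unfolding lhs by (intro eqn_mult[OF eqn_mult[OF eqn_refl e1] e2])
    show ?thesis by (rule eqn_trans[OF eqn_sym[OF l] r])
  qed
  then show ?thesis by (rule eqn_ext)
qed


abbreviation C :: "nat \<Rightarrow> rat fps \<Rightarrow> rat fps" where "C d f \<equiv> f oo fps_X ^ d"

lemma C_nth: assumes d: "d \<ge> 1" shows "C d f $ n = (if d dvd n then f $ (n div d) else 0)"
proof -
  have "C d f $ n = (\<Sum>i=0..n. f $ i * (if n = d * i then 1 else 0))"
    unfolding fps_compose_nth by (simp add: power_mult[symmetric] fps_X_power_nth)
  also have "\<dots> = (\<Sum>i\<in>{0..n}. if i = n div d \<and> d dvd n then f $ i else 0)"
    by (rule sum.cong[OF refl]) (use d in auto)
  also have "\<dots> = (if d dvd n then f $ (n div d) else 0)"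
  proof (cases "d dvd n")
    case True
    have "n div d \<le> n" by simp
    then show ?thesis using True by (simp add: sum.delta)
  next
    case False then show ?thesis by simp
  qed
  finally show ?thesis .
qed

lemma C_mult: "d \<ge> 1 \<Longrightarrow> C d (f * g) = C d f * C d g"
  by (rule fps_compose_mult_distrib) simp

lemma C_power: "d \<ge> 1 \<Longrightarrow> C d (f ^ k) = C d f ^ k"
  by (rule fps_compose_power[symmetric]) simp

lemma C_inverse: "d \<ge> 1 \<Longrightarrow> f $ 0 \<noteq> 0 \<Longrightarrow> C d (inverse f) = inverse (C d f)"
  by (rule fps_inverse_compose) simp_all

lemma C_numeral: "C d (numeral k) = numeral k"
  by (metis fps_const_compose numeral_fps_const)

lemma C_eqn: assumes d: "d \<ge> 1" "eqn n f g" shows "eqn n (C d f) (C d g)"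
  using assms unfolding eqn_def C_nth[OF d(1)]
  by (auto simp: div_le_dividend le_trans[OF div_le_dividend])

lemma C_P: assumes d: "d \<ge> 1" shows "C d (P k M) = P (k*d) M"
proof (induction M)
  case 0 then show ?case by simp
next
  case (Suc M)
  have "C d (1 - fps_X ^ (k * Suc M)) = 1 - fps_X ^ (k * d * Suc M)"
    using d by (simp add: fps_compose_sub_distrib fps_X_power_compose power_mult[symmetric] mult_ac)
  then show ?case using d by (simp add: P_Suc C_mult Suc.IH)
qed

lemma C_eta: assumes d: "d \<ge> 1" and k: "k \<ge> 1" shows "C d (eta_f k) = eta_f (k*d)"
proof (rule eqn_ext)
  fix n
  have kd: "k * d \<ge> 1" using d k by simp
  have "eqn n (C d (eta_f k)) (C d (P k n))" by (rule C_eqn[OF d eta_P[OF k]])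
  also have "C d (P k n) = P (k*d) n" by (rule C_P[OF d])
  finally show "eqn n (C d (eta_f k)) (eta_f (k*d))"
    by (rule eqn_trans) (rule eqn_sym[OF eta_P[OF kd]])
qed

lemma even_odd:
  "(C 2 A + fps_X * C 2 B) $ (2*n) = A $ n"
  "(C 2 A + fps_X * C 2 B) $ (2*n+1) = B $ n"
  by (simp_all add: C_nth fps_X_mult_nth)


lemma tr2: "2 * tr t = t * (t - 1)"
proof -
  have "even (t * (t - 1))" by simp
  then show ?thesis unfolding tr_def by simp
qed

lemma ex11: "int (ex 1 1 t) = t^2"
  unfolding ex_int using tr_succ[of t] tr2[of t] by (simp add: power2_eq_square algebra_simps)

lemma ex10: "int (ex 1 0 t) = tr t"
  unfolding ex_int by simp

definition sq :: "nat \<Rightarrow> int set" where "sq n = {t. t^2 = int n}"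
definition trs :: "nat \<Rightarrow> int set" where "trs n = {t. tr t = int n}"

lemma Th11_nth: "Th 1 1 $ n = of_nat (card (sq n))"
proof -
  have "{t. ex 1 1 t = n} = sq n" unfolding sq_def using ex11 by (metis of_nat_eq_iff)
  then show ?thesis by (simp add: Th_def)
qed

lemma Th10_nth: "Th 1 0 $ n = of_nat (card (trs n))"
proof -
  have "{t. ex 1 0 t = n} = trs n" unfolding trs_def using ex10 by (metis of_nat_eq_iff)
  then show ?thesis by (simp add: Th_def)
qed

lemma sq_finite: "finite (sq n)"
proof -
  have "sq n \<subseteq> {- int n - 1 .. int n + 1}"
  proof
    fix t assume "t \<in> sq n"
    then have "int (ex 1 1 t) = int n" using ex11[of t] unfolding sq_def by simp
    moreover have "\<bar>t\<bar> \<le> int (ex 1 1 t) + 1" by (rule ex_bound) simp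
    ultimately have "\<bar>t\<bar> \<le> int n + 1" by simp
    then show "t \<in> {- int n - 1 .. int n + 1}" by (simp add: abs_le_iff)
  qed
  then show ?thesis by (rule finite_subset) simp
qed

lemma sq_even: "{t \<in> sq n. even t} = (\<lambda>s. 2*s) ` (if 4 dvd n then sq (n div 4) else {})"
proof
  show "{t \<in> sq n. even t} \<subseteq> (\<lambda>s. 2*s) ` (if 4 dvd n then sq (n div 4) else {})"
  proof
    fix t assume t: "t \<in> {t \<in> sq n. even t}"
    then obtain s where s: "t = 2*s" by (auto elim: evenE)
    have "int n = 4 * s^2" using t s unfolding sq_def by (simp add: power2_eq_square)
    then have n4: "n = 4 * nat (s^2)" by simp
    then have "4 dvd n" "s^2 = int (n div 4)" by simp_all
    then show "t \<in> (\<lambda>s. 2*s) ` (if 4 dvd n then sq (n div 4) else {})"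
      unfolding sq_def using s by auto
  qed
next
  show "(\<lambda>s. 2*s) ` (if 4 dvd n then sq (n div 4) else {}) \<subseteq> {t \<in> sq n. even t}"
  proof
    fix t assume "t \<in> (\<lambda>s. 2*s) ` (if 4 dvd n then sq (n div 4) else {})"
    then obtain s where s: "t = 2*s" "4 dvd n" "s^2 = int (n div 4)" by (auto split: if_splits simp: sq_def)
    then have "t^2 = int n" by (auto simp: power2_eq_square elim!: dvdE)
    then show "t \<in> {t \<in> sq n. even t}" using s unfolding sq_def by auto
  qed
qed

lemma sq_odd: "{t \<in> sq n. odd t} = (\<lambda>s. 2*s - 1) ` (if n mod 8 = 1 then trs (n div 8) else {})"
proof
  show "{t \<in> sq n. odd t} \<subseteq> (\<lambda>s. 2*s - 1) ` (if n mod 8 = 1 then trs (n div 8) else {})"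
  proof
    fix t assume t: "t \<in> {t \<in> sq n. odd t}"
    have "t = 2*((t+1) div 2) - 1" using t by auto presburger
    then obtain s where s: "t = 2*s - 1" by blast
    have "int n = 8 * tr s + 1" using t s tr2[of s] unfolding sq_def by (simp add: power2_eq_square algebra_simps)
    then have n8: "n = 8 * nat (tr s) + 1" using tr_nonneg[of s] by simp
    then have "n mod 8 = 1" "tr s = int (n div 8)" using tr_nonneg[of s] by simp_all
    then show "t \<in> (\<lambda>s. 2*s - 1) ` (if n mod 8 = 1 then trs (n div 8) else {})"
      unfolding trs_def using s by auto
  qed
next
  show "(\<lambda>s. 2*s - 1) ` (if n mod 8 = 1 then trs (n div 8) else {}) \<subseteq> {t \<in> sq n. odd t}"
  proof
    fix t assume "t \<in> (\<lambda>s. 2*s - 1) ` (if n mod 8 = 1 then trs (n div 8) else {})"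
    then obtain s where s: "t = 2*s - 1" "n mod 8 = 1" "tr s = int (n div 8)" by (auto split: if_splits simp: trs_def)
    have "n = 8 * (n div 8) + 1" using s(2) by presburger
    then have "int n = 8 * tr s + 1" using s(3) by simp
    moreover have "t^2 = 4*(s*(s-1)) + 1" unfolding s(1) by (simp add: power2_eq_square algebra_simps)
    moreover have "4*(s*(s-1)) = 8 * tr s" using tr2[of s] by simp
    ultimately have "t^2 = int n" by simp
    then show "t \<in> {t \<in> sq n. odd t}" using s unfolding sq_def by auto
  qed
qed

lemma card_sq: "card (sq n) = (if 4 dvd n then card (sq (n div 4)) else 0) + (if n mod 8 = 1 then card (trs (n div 8)) else 0)"
proof -
  have fin: "finite (sq n)" by (rule sq_finite)
  have "card (sq n) = card {t \<in> sq n. even t} + card {t \<in> sq n. odd t}"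
  proof -
    have "sq n = {t \<in> sq n. even t} \<union> {t \<in> sq n. odd t}" by auto
    moreover have "{t \<in> sq n. even t} \<inter> {t \<in> sq n. odd t} = {}" by auto
    moreover have "finite {t \<in> sq n. even t}" "finite {t \<in> sq n. odd t}" using fin by simp_all
    ultimately show ?thesis using card_Un_disjoint[of "{t \<in> sq n. even t}" "{t \<in> sq n. odd t}"]
      by simp
  qed
  also have "card {t \<in> sq n. even t} = (if 4 dvd n then card (sq (n div 4)) else 0)"
    unfolding sq_even by (subst card_image) (auto simp: inj_on_def)
  also have "card {t \<in> sq n. odd t} = (if n mod 8 = 1 then card (trs (n div 8)) else 0)"
    unfolding sq_odd by (subst card_image) (auto simp: inj_on_def)
  finally show ?thesis .
qed

lemma Th_dissect: "Th 1 1 = C 4 (Th 1 1) + fps_X * C 8 (Th 1 0)"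
proof (rule fps_ext)
  fix n
  have "(fps_X * C 8 (Th 1 0)) $ n = (if n mod 8 = 1 then Th 1 0 $ (n div 8) else 0)"
  proof (cases n)
    case 0 then show ?thesis by (simp add: fps_X_mult_nth)
  next
    case (Suc n')
    have "8 dvd n' \<longleftrightarrow> n mod 8 = 1" using Suc by presburger
    moreover have "8 dvd n' \<Longrightarrow> n' div 8 = n div 8" using Suc by presburger
    ultimately show ?thesis using Suc by (simp add: fps_X_mult_nth C_nth)
  qed
  then have x8: "(fps_X * C 8 (Th 1 0)) $ n = (if n mod 8 = 1 then of_nat (card (trs (n div 8))) else 0)"
    unfolding Th10_nth .
  have d4: "(4::nat) \<ge> 1" by simp
  have c4: "C 4 (Th 1 1) $ n = (if 4 dvd n then of_nat (card (sq (n div 4))) else 0)"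
    unfolding C_nth[OF d4] Th11_nth ..
  show "Th 1 1 $ n = (C 4 (Th 1 1) + fps_X * C 8 (Th 1 0)) $ n"
    unfolding fps_add_nth c4 x8 Th11_nth card_sq[of n] by simp
qed


lemma solve_inv2: fixes A B R :: "rat fps" assumes "B $ 0 \<noteq> 0" "A * inverse B = R" shows "A = R * B"
proof -
  have "A = A * (inverse B * B)" using assms(1) by (simp add: inverse_mult_eq_1)
  also have "\<dots> = R * B" using assms(2) by (simp add: mult.assoc[symmetric])
  finally show ?thesis .
qed

lemma ThA': "Th 1 1 = (eta_f 2 * eta_f 2 * inverse (eta_f 4 * eta_f 1))^2 * eta_f 2"
  by (rule solve_inv2[OF _ ThA]) simp

lemma ThB': "Th 1 0 = 2 * (eta_f 2 * inverse (eta_f 1)) * (eta_f 2 * inverse (eta_f 1)) * eta_f 1"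
  by (rule solve_inv2[OF _ ThB]) simp

definition EVN :: "rat fps" where "EVN = (eta_f 4 * eta_f 4 * inverse (eta_f 8 * eta_f 2))^2 * eta_f 4"
definition ODD :: "rat fps" where "ODD = 2 * (eta_f 8 * inverse (eta_f 4)) * (eta_f 8 * inverse (eta_f 4)) * eta_f 4"
definition WW :: "nat \<Rightarrow> rat fps" where "WW c = eta_f 2 ^ (c+1) * inverse (eta_f 1 ^ (2*c+2))"

lemma C4_Th: "C 4 (Th 1 1) = C 2 EVN"
  unfolding ThA' EVN_def by (simp add: C_mult C_power C_inverse C_eta)

lemma C8_Th: "C 8 (Th 1 0) = C 2 ODD"
  unfolding ThB' ODD_def by (simp add: C_mult C_power C_inverse C_eta C_numeral)

lemma C2_WW: "C 2 (WW c) = eta_f 4 ^ (c+1) * inverse (eta_f 2 ^ (2*c+2))"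
  unfolding WW_def by (simp add: C_mult C_power C_inverse C_eta)

lemma Lnz: "k \<ge> 1 \<Longrightarrow> L (eta_f k) \<noteq> 0" by (rule L_nz) simp

lemma gf_eq: assumes c: "c \<ge> 1" shows "overcubic_gf c = C 2 (WW c) * Th 1 1"
proof -
  obtain c' where c': "c = Suc c'" using c by (cases c) auto
  have "L (overcubic_gf c) = L (C 2 (WW c) * Th 1 1)"
    unfolding overcubic_gf_def C2_WW ThA'
    using Lnz[of 1] Lnz[of 2] Lnz[of 4]
    by (simp add: L_mult L_power L_inverse c' field_simps power_add power_mult_distrib mult_2)
       (simp add: eval_nat_numeral algebra_simps)
  then show ?thesis by simp
qed

lemma gf_split: assumes c: "c \<ge> 1"
  shows "overcubic_gf c = C 2 (WW c * EVN) + fps_X * C 2 (WW c * ODD)"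
proof -
  have "overcubic_gf c = C 2 (WW c) * (C 2 EVN + fps_X * C 2 ODD)"
    unfolding gf_eq[OF c] C4_Th[symmetric] C8_Th[symmetric] Th_dissect[symmetric] ..
  also have "\<dots> = C 2 (WW c * EVN) + fps_X * C 2 (WW c * ODD)"
    by (simp add: C_mult algebra_simps)
  finally show ?thesis .
qed

lemma even_part: assumes c: "c \<ge> 1" shows "Abs_fps (\<lambda>n. abar c (2 * n)) = WW c * EVN"
  by (rule fps_ext) (simp only: fps_nth_Abs_fps abar_def gf_split[OF c] even_odd)

lemma odd_part: assumes c: "c \<ge> 1" shows "Abs_fps (\<lambda>n. abar c (2 * n + 1)) = WW c * ODD"
  by (rule fps_ext) (simp only: fps_nth_Abs_fps abar_def gf_split[OF c] even_odd)

lemma eta_nz: "k \<ge> 1 \<Longrightarrow> eta_f k \<noteq> 0" by (rule fps_nonzeroI[of _ 0]) simp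

lemma alg_even_gen:
  fixes a b d h :: "'a::field"
  assumes nz: "a \<noteq> 0" "b \<noteq> 0" "h \<noteq> 0" and c: "c \<ge> 1"
  shows "b^(c+1) * inverse (a^(2*c+2)) * ((d*d*inverse(h*b))^2 * d) = b^(c-1) * d^5 * inverse (a^(2*c+2) * h^2)"
proof -
  have e: "b^(c+1) = b^(c-1) * (b*b)" using c by (simp add: power_add[symmetric] power2_eq_square[symmetric])
  define B where "B = b^(c-1)"
  define A where "A = a^(2*c+2)"
  have A: "A \<noteq> 0" using nz unfolding A_def by simp
  have "B * (b*b) * inverse A * ((d*d*inverse(h*b))^2 * d) = B * d^5 * inverse (A * h^2)"
    using A nz by (simp add: field_simps power2_eq_square eval_nat_numeral)
  then show ?thesis unfolding e B_def A_def .
qed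

lemma alg_odd_gen:
  fixes a b d h :: "'a::field"
  assumes nz: "a \<noteq> 0" "b \<noteq> 0" "d \<noteq> 0"
  shows "b^(c+1) * inverse (a^(2*c+2)) * (2 * (h * inverse d) * (h * inverse d) * d) = 2 * (h^2 * inverse d) * (b * inverse (a^2))^(c+1)"
proof -
  have e: "(b * inverse (a^2))^(c+1) = b^(c+1) * inverse (a^(2*c+2))"
  proof -
    have "(b * inverse (a^2))^(c+1) = b^(c+1) * inverse ((a^2)^(c+1))"
      by (simp only: power_mult_distrib power_inverse)
    also have "(a^2)^(c+1) = a^(2*c+2)" by (simp only: power_mult[symmetric]) simp
    finally show ?thesis .
  qed
  define B where "B = b^(c+1) * inverse (a^(2*c+2))"
  have "B * (2 * (h * inverse d) * (h * inverse d) * d) = 2 * (h^2 * inverse d) * B"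
    using nz by (simp add: field_simps power2_eq_square)
  then show ?thesis unfolding e B_def .
qed

lemma even_alg: assumes c: "c \<ge> 1"
  shows "WW c * EVN = eta_f 2 ^ (c - 1) * eta_f 4 ^ 5 * inverse (eta_f 1 ^ (2 * c + 2) * eta_f 8 ^ 2)"
proof -
  have "L (WW c * EVN) = L (eta_f 2)^(c+1) * inverse (L (eta_f 1)^(2*c+2)) * ((L (eta_f 4) * L (eta_f 4) * inverse(L (eta_f 8) * L (eta_f 2)))^2 * L (eta_f 4))"
    unfolding WW_def EVN_def by (simp add: L_mult L_power L_inverse)
  also have "\<dots> = L (eta_f 2)^(c-1) * L (eta_f 4)^5 * inverse (L (eta_f 1)^(2*c+2) * L (eta_f 8)^2)"
    by (rule alg_even_gen) (use c in \<open>simp_all add: eta_nz\<close>)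
  also have "\<dots> = L (eta_f 2 ^ (c - 1) * eta_f 4 ^ 5 * inverse (eta_f 1 ^ (2 * c + 2) * eta_f 8 ^ 2))"
    by (simp add: L_mult L_power L_inverse)
  finally show ?thesis by (simp only: fps_to_fls_eq_iff)
qed

lemma odd_alg: assumes c: "c \<ge> 1"
  shows "WW c * ODD = 2 * (eta_f 8 ^ 2 * inverse (eta_f 4)) * (eta_f 2 * inverse (eta_f 1 ^ 2)) ^ (c + 1)"
proof -
  have "L (WW c * ODD) = L (eta_f 2)^(c+1) * inverse (L (eta_f 1)^(2*c+2)) * (2 * (L (eta_f 8) * inverse (L (eta_f 4))) * (L (eta_f 8) * inverse (L (eta_f 4))) * L (eta_f 4))"
    unfolding WW_def ODD_def by (simp add: L_mult L_power L_inverse)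
  also have "\<dots> = 2 * (L (eta_f 8)^2 * inverse (L (eta_f 4))) * (L (eta_f 2) * inverse (L (eta_f 1)^2))^(c+1)"
    by (rule alg_odd_gen) (simp_all add: eta_nz)
  also have "\<dots> = L (2 * (eta_f 8 ^ 2 * inverse (eta_f 4)) * (eta_f 2 * inverse (eta_f 1 ^ 2)) ^ (c + 1))"
    by (simp add: L_mult L_power L_inverse)
  finally show ?thesis by (simp only: fps_to_fls_eq_iff)
qed

theorem lemma5p2:
  fixes c :: nat
  assumes "c \<ge> 1"
  shows "Abs_fps (\<lambda>n. abar c (2 * n)) =
           eta_f 2 ^ (c - 1) * eta_f 4 ^ 5 * inverse (eta_f 1 ^ (2 * c + 2) * eta_f 8 ^ 2)
     \<and> Abs_fps (\<lambda>n. abar c (2 * n + 1)) =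
           2 * (eta_f 8 ^ 2 * inverse (eta_f 4)) * (eta_f 2 * inverse (eta_f 1 ^ 2)) ^ (c + 1)"
  using even_part[OF assms] odd_part[OF assms] even_alg[OF assms] odd_alg[OF assms] by simp


end
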